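(* Fix integers $h\ge0$ and $k\ge1$. For a function $\pi:[h]\to[k]$ and $i\in[k]$ let $h_i(\pi)=|\{q\in[h]:\pi(q)=i\}|$. Then for any $C\ge3$, $$\sum_{\pi:[h]\to[k]}\frac{\prod_{i=1}^kh_i(\pi)^{Ch_i(\pi)}}{h^{Ch}}\le\max\Big\{k^7,\ (hk+1)\exp\!\Big(\frac{2k}{h^{C-1}}\Big)\Big\},$$ with the convention $0^0=1$. *)

theory Defs
  imports Complex_Main "HOL-Library.FuncSet"
begin

definition zpow :: "real \<Rightarrow> real \<Rightarrow> real" where
  "zpow x y = (if x = 0 \<and> y = 0 then 1 else x powr y)"

definition fib :: "nat \<Rightarrow> (nat \<Rightarrow> nat) \<Rightarrow> nat \<Rightarrow> nat" where
  "fib h p i = card {q \<in> {1..h}. p q = i}"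

end

theory Submission
  imports Defs
begin

definition uD :: "nat \<Rightarrow> real \<Rightarrow> nat \<Rightarrow> real" where
  "uD h e n = (if n = 0 then 1 else (real n / real h) powr (e * real n))"

lemma uD_nonneg: "0 \<le> uD h e n"
  by (simp add: uD_def)

lemma uD_le1: "n \<le> h \<Longrightarrow> 0 \<le> e \<Longrightarrow> uD h e n \<le> 1"
  unfolding uD_def by (auto intro!: powr_le1 simp: divide_le_eq_1)

lemma fib_le: "fib h p i \<le> h"
proof -
  have "fib h p i \<le> card {1..h}" unfolding fib_def by (rule card_mono) auto
  then show ?thesis by simp
qed

lemma fib_sum:
  assumes "p \<in> {1..h} \<rightarrow>\<^sub>E {1..k}"
  shows "(\<Sum>i\<in>{1..k}. fib h p i) = h"
proof -
  have "(\<Sum>i\<in>{1..k}. \<Sum>q\<in>{x. x \<in> {1..h} \<and> p x = i}. (1::nat)) = (\<Sum>q\<in>{1..h}. 1)"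
    by (rule sum.group) (use assms in auto)
  then show ?thesis unfolding fib_def by simp
qed

lemma prod_fibres:
  fixes F :: "nat \<Rightarrow> real"
  assumes "p \<in> {1..h} \<rightarrow>\<^sub>E {1..k}"
  shows "(\<Prod>q\<in>{1..h}. F (p q)) = (\<Prod>i\<in>{1..k}. F i ^ fib h p i)"
proof -
  have "(\<Prod>i\<in>{1..k}. \<Prod>q\<in>{x. x \<in> {1..h} \<and> p x = i}. F (p q)) = (\<Prod>q\<in>{1..h}. F (p q))"
    by (rule prod.group) (use assms in auto)
  moreover have "(\<Prod>q\<in>{x. x \<in> {1..h} \<and> p x = i}. F (p q)) = F i ^ fib h p i" for i
  proof -
    have "(\<Prod>q\<in>{x. x \<in> {1..h} \<and> p x = i}. F (p q)) = (\<Prod>q\<in>{x. x \<in> {1..h} \<and> p x = i}. F i)"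
      by (rule prod.cong) auto
    then show ?thesis unfolding fib_def by simp
  qed
  ultimately show ?thesis by simp
qed

lemma term_rewrite:
  assumes "h \<ge> 1" "p \<in> {1..h} \<rightarrow>\<^sub>E {1..k}"
  shows "(\<Prod>i=1..k. zpow (real (fib h p i)) (C * real (fib h p i))) / zpow (real h) (C * real h)
       = (\<Prod>i=1..k. uD h C (fib h p i))"
proof -
  have hpos: "real h > 0" using assms by simp
  have "zpow (real h) (C * real h) = real h powr (\<Sum>i=1..k. C * real (fib h p i))"
    using hpos fib_sum[OF assms(2)] by (simp add: zpow_def sum_distrib_left[symmetric] flip: of_nat_sum)
  also have "\<dots> = (\<Prod>i=1..k. real h powr (C * real (fib h p i)))"
    using hpos by (simp add: powr_sum)
  finally have d: "zpow (real h) (C * real h) = (\<Prod>i=1..k. real h powr (C * real (fib h p i)))" .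
  show ?thesis unfolding d prod_dividef[symmetric]
  proof (rule prod.cong[OF refl])
    fix i
    show "zpow (real (fib h p i)) (C * real (fib h p i)) / real h powr (C * real (fib h p i)) = uD h C (fib h p i)"
      using hpos by (auto simp: zpow_def uD_def powr_divide)
  qed
qed

lemma uD_split:
  assumes "h \<ge> 1"
  shows "uD h C n = (real n / real h) ^ n * uD h (C - 1) n"
proof (cases "n = 0")
  case True then show ?thesis by (simp add: uD_def)
next
  case False
  then have pos: "real n / real h > 0" using assms by simp
  have "(real n / real h) powr (C * real n) = (real n / real h) powr (real n + (C - 1) * real n)"
    by (simp add: algebra_simps)
  also have "\<dots> = (real n / real h) ^ n * (real n / real h) powr ((C - 1) * real n)"
    using pos by (simp add: powr_add powr_realpow)
  finally show ?thesis using False by (simp add: uD_def)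
qed

definition cv :: "nat \<Rightarrow> nat \<Rightarrow> (nat \<Rightarrow> nat) \<Rightarrow> nat \<Rightarrow> nat" where
  "cv h k p = restrict (fib h p) {1..k}"

lemma step1:
  assumes "h \<ge> 1"
  shows "(\<Sum>p\<in>{1..h} \<rightarrow>\<^sub>E {1..k}. \<Prod>i=1..k. uD h C (fib h p i))
       \<le> (\<Sum>c\<in>cv h k ` ({1..h} \<rightarrow>\<^sub>E {1..k}). \<Prod>i=1..k. uD h (C - 1) (c i))"
proof -
  define FS where "FS = {1..h} \<rightarrow>\<^sub>E {1..k}"
  define G where "G c = (\<Prod>i=1..k. uD h (C - 1) (c i))" for c
  define Phi where "Phi c p = (\<Prod>q\<in>{1..h}. real (c (p q)) / real h) * G c" for c p
  have fin: "finite FS" unfolding FS_def by (simp add: finite_PiE)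
  have G_nn: "0 \<le> G c" for c unfolding G_def by (simp add: prod_nonneg uD_nonneg)
  have eq: "(\<Prod>i=1..k. uD h C (fib h p i)) = Phi (cv h k p) p" if p: "p \<in> FS" for p
  proof -
    have "(\<Prod>i=1..k. uD h C (fib h p i)) = (\<Prod>i=1..k. (real (fib h p i) / real h) ^ fib h p i) * G (cv h k p)"
      unfolding G_def using assms by (simp add: uD_split[OF assms, of C] prod.distrib cv_def)
    also have "(\<Prod>i=1..k. (real (fib h p i) / real h) ^ fib h p i) = (\<Prod>i=1..k. (real (cv h k p i) / real h) ^ fib h p i)"
      by (rule prod.cong) (auto simp: cv_def)
    also have "\<dots> = (\<Prod>q\<in>{1..h}. real (cv h k p (p q)) / real h)"
      using prod_fibres[of p h k "\<lambda>i. real (cv h k p i) / real h"] p unfolding FS_def by simp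
    finally show ?thesis unfolding Phi_def by simp
  qed
  have sum1: "(\<Sum>p\<in>FS. \<Prod>q\<in>{1..h}. real (c (p q)) / real h) = 1" if c: "c \<in> cv h k ` FS" for c
  proof -
    obtain p0 where p0: "p0 \<in> FS" and cp: "c = cv h k p0" using c by auto
    have "(\<Sum>p\<in>FS. \<Prod>q\<in>{1..h}. real (c (p q)) / real h) = (\<Prod>q\<in>{1..h}. \<Sum>i\<in>{1..k}. real (c i) / real h)"
      unfolding FS_def by (rule prod_sum_PiE[symmetric]) auto
    also have "(\<Sum>i\<in>{1..k}. real (c i) / real h) = 1"
    proof -
      have "(\<Sum>i\<in>{1..k}. real (c i)) = real (\<Sum>i\<in>{1..k}. fib h p0 i)"
        unfolding cp cv_def by simp
      also have "\<dots> = real h" using fib_sum p0 unfolding FS_def by simp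
      finally show ?thesis using assms by (simp add: sum_divide_distrib[symmetric])
    qed
    finally show ?thesis by simp
  qed
  have "(\<Sum>p\<in>FS. \<Prod>i=1..k. uD h C (fib h p i)) = (\<Sum>p\<in>FS. Phi (cv h k p) p)"
    by (rule sum.cong[OF refl], rule eq)
  also have "\<dots> = (\<Sum>c\<in>cv h k ` FS. \<Sum>p\<in>{x. x \<in> FS \<and> cv h k x = c}. Phi (cv h k p) p)"
    by (rule sum.group[symmetric]) (use fin in auto)
  also have "\<dots> = (\<Sum>c\<in>cv h k ` FS. \<Sum>p\<in>{x. x \<in> FS \<and> cv h k x = c}. Phi c p)"
    by (rule sum.cong) auto
  also have "\<dots> \<le> (\<Sum>c\<in>cv h k ` FS. \<Sum>p\<in>FS. Phi c p)"
    by (rule sum_mono, rule sum_mono2) (use fin in \<open>auto simp: Phi_def G_nn prod_nonneg\<close>)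
  also have "\<dots> = (\<Sum>c\<in>cv h k ` FS. G c)"
  proof (rule sum.cong[OF refl])
    fix c assume "c \<in> cv h k ` FS"
    then show "(\<Sum>p\<in>FS. Phi c p) = G c"
      unfolding Phi_def sum_distrib_right[symmetric] using sum1 by simp
  qed
  finally show ?thesis unfolding FS_def G_def .
qed

lemma step2:
  assumes "h \<ge> 1" "k \<ge> 1" "D \<ge> 0"
  shows "(\<Sum>c\<in>cv h k ` ({1..h} \<rightarrow>\<^sub>E {1..k}). \<Prod>i=1..k. uD h D (c i))
       \<le> real k * (\<Sum>n=0..h div 2. uD h D n) ^ (k - 1)"
proof -
  define K where "K = {1..k::nat}"
  define T where "T = cv h k ` ({1..h} \<rightarrow>\<^sub>E {1..k})"
  define G where "G c = (\<Prod>i\<in>K. uD h D (c i))" for c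
  define M where "M c = Max (c ` K)" for c :: "nat \<Rightarrow> nat"
  define S where "S = (\<Sum>n=0..h div 2. uD h D n)"
  have finK: "finite K" and neK: "K \<noteq> {}" using assms unfolding K_def by auto
  have finT: "finite T" unfolding T_def by (simp add: finite_PiE)
  have G_nn: "0 \<le> G c" for c unfolding G_def by (simp add: prod_nonneg uD_nonneg)
  have Tprop: "(\<Sum>i\<in>K. c i) = h \<and> (\<forall>i. i \<notin> K \<longrightarrow> c i = undefined)" if "c \<in> T" for c
  proof -
    obtain p where p: "p \<in> {1..h} \<rightarrow>\<^sub>E {1..k}" and cp: "c = cv h k p" using \<open>c \<in> T\<close> unfolding T_def by auto
    show ?thesis using fib_sum[OF p] unfolding cp cv_def K_def by auto
  qed
  have step_a: "(\<Sum>c\<in>T. G c) \<le> (\<Sum>c\<in>T. \<Sum>i0\<in>{i\<in>K. c i = M c}. G c)"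
  proof (rule sum_mono)
    fix c assume "c \<in> T"
    have "M c \<in> c ` K" unfolding M_def using finK neK by (intro Max_in) auto
    then obtain i where "i \<in> K" "c i = M c" by auto
    then have ne: "{j\<in>K. c j = M c} \<noteq> {}" by auto
    have "card {i\<in>K. c i = M c} > 0" using ne finK by (simp add: card_gt_0_iff)
    then have "card {i\<in>K. c i = M c} \<ge> 1" by simp
    then have "1 * G c \<le> real (card {i\<in>K. c i = M c}) * G c"
      using G_nn[of c] by (intro mult_right_mono) auto
    then show "G c \<le> (\<Sum>i0\<in>{i\<in>K. c i = M c}. G c)" by simp
  qed
  also have "\<dots> = (\<Sum>i0\<in>K. \<Sum>c\<in>{c\<in>T. c i0 = M c}. G c)"
    by (rule sum.swap_restrict[OF finT finK])
  also have "\<dots> \<le> (\<Sum>i0\<in>K. S ^ (k - 1))"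
  proof (rule sum_mono)
    fix i0 assume i0: "i0 \<in> K"
    define T0 where "T0 = {c\<in>T. c i0 = M c}"
    define R where "R c = restrict c (K - {i0})" for c :: "nat \<Rightarrow> nat"
    define P where "P = (K - {i0}) \<rightarrow>\<^sub>E {0..h div 2}"
    have "(\<Sum>c\<in>T0. G c) \<le> (\<Sum>c\<in>T0. \<Prod>i\<in>K - {i0}. uD h D (c i))"
    proof (rule sum_mono)
      fix c assume "c \<in> T0"
      then have "c \<in> T" unfolding T0_def by auto
      have "c i0 \<le> h" using Tprop[OF \<open>c \<in> T\<close>] i0 finK
        by (metis member_le_sum zero_le)
      then have "uD h D (c i0) \<le> 1" using uD_le1 assms by auto
      moreover have "G c = uD h D (c i0) * (\<Prod>i\<in>K - {i0}. uD h D (c i))"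
        unfolding G_def using i0 finK by (simp add: prod.remove)
      ultimately show "G c \<le> (\<Prod>i\<in>K - {i0}. uD h D (c i))"
        by (simp add: mult_left_le_one_le prod_nonneg uD_nonneg)
    qed
    also have "\<dots> = (\<Sum>c\<in>T0. \<Prod>i\<in>K - {i0}. uD h D (R c i))"
      by (rule sum.cong[OF refl], rule prod.cong) (auto simp: R_def)
    also have "\<dots> = (\<Sum>c'\<in>R ` T0. \<Prod>i\<in>K - {i0}. uD h D (c' i))"
    proof (rule sum.reindex[symmetric, unfolded comp_def])
      show "inj_on R T0"
      proof (rule inj_onI)
        fix c1 c2 assume c1: "c1 \<in> T0" and c2: "c2 \<in> T0" and eq: "R c1 = R c2"
        have t1: "c1 \<in> T" and t2: "c2 \<in> T" using c1 c2 unfolding T0_def by auto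
        have oth: "c1 i = c2 i" if "i \<in> K - {i0}" for i
          using fun_cong[OF eq, of i] that unfolding R_def by auto
        have s1: "c1 i0 + (\<Sum>i\<in>K - {i0}. c1 i) = h" using Tprop[OF t1] i0 finK
          by (simp add: sum.remove)
        have s2: "c2 i0 + (\<Sum>i\<in>K - {i0}. c2 i) = h" using Tprop[OF t2] i0 finK
          by (simp add: sum.remove)
        have "(\<Sum>i\<in>K - {i0}. c1 i) = (\<Sum>i\<in>K - {i0}. c2 i)" by (rule sum.cong) (auto simp: oth)
        then have "c1 i0 = c2 i0" using s1 s2 by simp
        then show "c1 = c2" using oth Tprop[OF t1] Tprop[OF t2]
          by (intro ext) (metis insert_Diff_single insert_iff)
      qed
    qed
    also have "\<dots> \<le> (\<Sum>c'\<in>P. \<Prod>i\<in>K - {i0}. uD h D (c' i))"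
    proof (rule sum_mono2)
      show "finite P" unfolding P_def using finK by (simp add: finite_PiE)
      show "R ` T0 \<subseteq> P"
      proof
        fix x assume "x \<in> R ` T0"
        then obtain c where c: "c \<in> T0" and x: "x = R c" by auto
        have t: "c \<in> T" and ci0: "c i0 = M c" using c unfolding T0_def by auto
        have "c i \<le> h div 2" if i: "i \<in> K - {i0}" for i
        proof -
          have "c i \<le> M c" unfolding M_def using finK i by (intro Max_ge) auto
          moreover have "c i + c i0 \<le> h"
          proof -
            have "(\<Sum>j\<in>{i, i0}. c j) \<le> (\<Sum>j\<in>K. c j)"
              using i i0 finK by (intro sum_mono2) auto
            then show ?thesis using Tprop[OF t] i by auto
          qed
          ultimately show ?thesis using ci0 by linarith
        qed
        then show "x \<in> P" unfolding x P_def R_def by auto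
      qed
      show "\<And>b. b \<in> P - R ` T0 \<Longrightarrow> 0 \<le> (\<Prod>i\<in>K - {i0}. uD h D (b i))"
        by (simp add: prod_nonneg uD_nonneg)
    qed
    also have "\<dots> = (\<Prod>i\<in>K - {i0}. \<Sum>n\<in>{0..h div 2}. uD h D n)"
      unfolding P_def using finK by (intro prod_sum_PiE[symmetric]) auto
    also have "\<dots> = S ^ (k - 1)"
      using i0 finK unfolding S_def by (simp add: K_def)
    finally show "(\<Sum>c\<in>{c\<in>T. c i0 = M c}. G c) \<le> S ^ (k - 1)" unfolding T0_def .
  qed
  also have "\<dots> = real k * S ^ (k - 1)" by (simp add: K_def)
  finally show ?thesis unfolding T_def G_def S_def K_def .
qed

lemma tele:
  "(\<Sum>n=1..L. real n ^ 4 / 4 ^ n)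
     = 380/81 - (27*real L^4 + 144*real L^3 + 360*real L^2 + 528*real L + 380) / (81 * 4 ^ L)"
proof (induction L)
  case 0 then show ?case by simp
next
  case (Suc L)
  have "(\<Sum>n=1..Suc L. real n ^ 4 / 4 ^ n) = (\<Sum>n=1..L. real n ^ 4 / 4 ^ n) + real (Suc L) ^ 4 / 4 ^ Suc L"
    by simp
  also have "\<dots> = 380/81 - (27*real (Suc L)^4 + 144*real (Suc L)^3 + 360*real (Suc L)^2 + 528*real (Suc L) + 380) / (81 * 4 ^ Suc L)"
    unfolding Suc.IH by (simp add: field_simps power2_eq_square power3_eq_cube power4_eq_xxxx)
  finally show ?case .
qed

lemma sum4:
  assumes "L \<ge> 1"
  shows "(\<Sum>n=2..L. real n ^ 4 / 4 ^ n) \<le> 1439/324"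
proof -
  have "(\<Sum>n=1..L. real n ^ 4 / 4 ^ n) = 1/4 + (\<Sum>n=2..L. real n ^ 4 / 4 ^ n)"
    using assms by (simp add: sum.atLeast_Suc_atMost numeral_2_eq_2)
  moreover have "(27*real L^4 + 144*real L^3 + 360*real L^2 + 528*real L + 380) / (81 * 4 ^ L) \<ge> 0"
    by simp
  ultimately show ?thesis using tele[of L] by linarith
qed

lemma two_n_le: "2 * n \<le> (2::nat) ^ n"
proof (induction n)
  case 0 then show ?case by simp
next
  case (Suc n)
  then show ?case by (cases n) auto
qed

lemma ybound:
  assumes "2 \<le> n" "2 * n \<le> h"
  shows "(real n ^ n / real h ^ (n - 1)) ^ 2 \<le> 16 * (real n ^ 4 / 4 ^ n) / real h ^ 2"
    and "real n ^ n / real h ^ (n - 1) \<le> 1"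
proof -
  have hpos: "real h > 0" using assms by simp
  define r where "r = real n / real h"
  have r0: "0 \<le> r" and r2: "r \<le> 1/2" using assms hpos unfolding r_def by (auto simp: field_simps)
  have y: "real n ^ n / real h ^ (n - 1) = real h * r ^ n"
  proof -
    have "real h ^ n = real h * real h ^ (n - 1)" using assms by (cases n) auto
    then show ?thesis unfolding r_def using hpos by (simp add: power_divide field_simps)
  qed
  have nn: "n = 2 + (n - 2)" using assms by simp
  have "r ^ n = r ^ 2 * r ^ (n - 2)" by (subst nn, subst power_add) simp
  also have "\<dots> \<le> r ^ 2 * (1/2) ^ (n - 2)"
    using r0 r2 by (intro mult_left_mono power_mono) auto
  finally have rn: "r ^ n \<le> r ^ 2 * (1/2) ^ (n - 2)" .
  have p2: "(2::real) ^ n = 4 * 2 ^ (n - 2)" by (subst nn) (simp add: power_add)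
  have yle: "real n ^ n / real h ^ (n - 1) \<le> 4 * real n ^ 2 / (real h * 2 ^ n)"
  proof -
    have "real n ^ n / real h ^ (n - 1) \<le> real h * (r ^ 2 * (1/2) ^ (n - 2))"
      unfolding y using rn hpos by (intro mult_left_mono) auto
    also have "\<dots> = 4 * real n ^ 2 / (real h * 2 ^ n)"
      unfolding r_def p2 using hpos by (simp add: power_divide field_simps power2_eq_square)
    finally show ?thesis .
  qed
  have four: "(2::real)^n * 2^n = 4^n" by (simp flip: power_mult_distrib)
  have y0: "0 \<le> real n ^ n / real h ^ (n - 1)" by simp
  have "(real n ^ n / real h ^ (n - 1)) ^ 2 \<le> (4 * real n ^ 2 / (real h * 2 ^ n)) ^ 2"
    using yle y0 by (intro power_mono) auto
  also have "\<dots> = 16 * (real n ^ 4 / 4 ^ n) / real h ^ 2"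
    using four by (simp add: power_divide power_mult_distrib field_simps power2_eq_square power4_eq_xxxx flip: power_mult)
  finally show "(real n ^ n / real h ^ (n - 1)) ^ 2 \<le> 16 * (real n ^ 4 / 4 ^ n) / real h ^ 2" .
  have "4 * real n ^ 2 \<le> real h * 2 ^ n"
  proof -
    have "real (2 * n) \<le> real (2 ^ n)" using two_n_le[of n] by linarith
    then have a: "2 * real n \<le> 2 ^ n" by simp
    have b: "2 * real n \<le> real h" using assms by linarith
    have "4 * real n ^ 2 = (2 * real n) * (2 * real n)" by (simp add: power2_eq_square)
    also have "\<dots> \<le> real h * 2 ^ n" using a b by (intro mult_mono) auto
    finally show ?thesis .
  qed
  then show "real n ^ n / real h ^ (n - 1) \<le> 1"
    using yle hpos by (smt (verit) divide_le_eq_1 mult_pos_pos zero_less_power)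
qed

lemma ysum:
  assumes "h \<ge> 8"
  shows "(\<Sum>n=2..h div 2. (real n ^ n / real h ^ (n - 1)) ^ 2) \<le> 1"
proof (cases "h = 8")
  case True
  have e: "{2..4::nat} = {2,3,4}" by auto
  show ?thesis unfolding True by (simp add: e power2_eq_square)
next
  case False
  then have h9: "h \<ge> 9" using assms by simp
  have "(\<Sum>n=2..h div 2. (real n ^ n / real h ^ (n - 1)) ^ 2)
      \<le> (\<Sum>n=2..h div 2. 16 * (real n ^ 4 / 4 ^ n) / real h ^ 2)"
    by (rule sum_mono, rule ybound(1)) auto
  also have "\<dots> = 16 * (\<Sum>n=2..h div 2. real n ^ 4 / 4 ^ n) / real h ^ 2"
    by (simp add: sum_divide_distrib sum_distrib_left)
  also have "\<dots> \<le> 16 * (1439/324) / real h ^ 2"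
    using sum4[of "h div 2"] h9 by (intro divide_right_mono mult_left_mono) auto
  also have "\<dots> \<le> 1"
  proof -
    have h9r: "(9::real) \<le> real h" using h9 by simp
    have "(81::real) = 9 * 9" by simp
    also have "\<dots> \<le> real h * real h" using h9r by (intro mult_mono) auto
    finally have "(81::real) \<le> real h ^ 2" by (simp add: power2_eq_square)
    then have "16 * (1439/324) \<le> real h ^ 2" by linarith
    moreover have "real h ^ 2 > 0" using h9 by simp
    ultimately show ?thesis by (simp add: divide_le_eq_1)
  qed
  finally show ?thesis .
qed

lemma Sbound:
  assumes "h \<ge> 8" "D \<ge> 2"
  shows "(\<Sum>n=0..h div 2. uD h D n) \<le> 1 + 2 / real h powr D"
proof -
  have hpos: "real h > 0" using assms by simp
  have L: "2 \<le> h div 2" using assms by simp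
  have split: "(\<Sum>n=0..h div 2. uD h D n) = uD h D 0 + uD h D 1 + (\<Sum>n=2..h div 2. uD h D n)"
    using L by (simp add: sum.atLeast_Suc_atMost numeral_2_eq_2)
  have u0: "uD h D 0 = 1" by (simp add: uD_def)
  have u1: "uD h D 1 = 1 / real h powr D" by (simp add: uD_def powr_divide)
  have ut: "uD h D n \<le> (real n ^ n / real h ^ (n - 1)) ^ 2 / real h powr D"
    if n: "n \<in> {2..h div 2}" for n
  proof -
    define y where "y = real n ^ n / real h ^ (n - 1)"
    have n2: "2 \<le> n" and nh: "2 * n \<le> h" using n by auto
    have y1: "y \<le> 1" unfolding y_def by (rule ybound(2)[OF n2 nh])
    have y0: "0 \<le> y" unfolding y_def by simp
    have "(real n / real h) ^ n = y / real h"
    proof -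
      have "real h ^ n = real h * real h ^ (n - 1)" using n2 by (cases n) auto
      then show ?thesis unfolding y_def using hpos by (simp add: power_divide field_simps)
    qed
    have "uD h D n = ((real n / real h) powr real n) powr D"
      using n2 by (simp add: uD_def powr_powr mult.commute)
    also have "\<dots> = (y / real h) powr D"
      using n2 hpos \<open>(real n / real h) ^ n = y / real h\<close> by (simp add: powr_realpow)
    also have "\<dots> = y powr D / real h powr D" by (simp add: powr_divide y0)
    also have "\<dots> \<le> y powr 2 / real h powr D"
      using y0 y1 assms by (intro divide_right_mono powr_mono') auto
    also have "\<dots> = y ^ 2 / real h powr D" using y0 by simp
    finally show ?thesis unfolding y_def .
  qed
  have "(\<Sum>n=2..h div 2. uD h D n) \<le> (\<Sum>n=2..h div 2. (real n ^ n / real h ^ (n - 1)) ^ 2 / real h powr D)"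
    by (rule sum_mono) (rule ut)
  also have "\<dots> = (\<Sum>n=2..h div 2. (real n ^ n / real h ^ (n - 1)) ^ 2) / real h powr D"
    by (simp add: sum_divide_distrib)
  also have "\<dots> \<le> 1 / real h powr D"
    using ysum[OF assms(1)] by (intro divide_right_mono) auto
  finally show ?thesis unfolding split u0 u1 by simp
qed

theorem lemmaB4:
  fixes h k :: nat and C :: real
  assumes "k \<ge> 1" and "C \<ge> 3"
  shows "(\<Sum>p\<in>{1..h} \<rightarrow>\<^sub>E {1..k}.
            (\<Prod>i=1..k. zpow (real (fib h p i)) (C * real (fib h p i)))
            / zpow (real h) (C * real h))
         \<le> max ((real k) ^ 7)
               ((real h * real k + 1) * exp (2 * real k / zpow (real h) (C - 1)))"
proof -
  define FS where "FS = {1..h} \<rightarrow>\<^sub>E {1..k}"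
  define V where "V = (\<Sum>p\<in>FS. (\<Prod>i=1..k. zpow (real (fib h p i)) (C * real (fib h p i)))
            / zpow (real h) (C * real h))"
  have k1: "real k \<ge> 1" using assms by simp
  have k7: "(1::real) \<le> real k ^ 7" using k1 by simp
  have Vrw: "V = (\<Sum>p\<in>FS. \<Prod>i=1..k. uD h C (fib h p i))" if "h \<ge> 1"
    unfolding V_def by (rule sum.cong[OF refl], rule term_rewrite[OF that]) (simp add: FS_def)
  have "V \<le> max ((real k) ^ 7) ((real h * real k + 1) * exp (2 * real k / zpow (real h) (C - 1)))"
  proof (cases "h = 0")
    case True
    have "V = 1" unfolding V_def FS_def True by (simp add: fib_def zpow_def)
    then show ?thesis using k7 by simp
  next
    case False
    then have h1: "h \<ge> 1" by simp
    show ?thesis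
    proof (cases "h \<le> 7")
      case True
      have "V \<le> (\<Sum>p\<in>FS. 1)"
        unfolding Vrw[OF h1]
        by (rule sum_mono, rule prod_le_1) (use assms in \<open>auto simp: uD_nonneg intro!: uD_le1 fib_le\<close>)
      also have "\<dots> = real k ^ h" unfolding FS_def by (simp add: card_PiE)
      also have "\<dots> \<le> real k ^ 7" using True k1 by (intro power_increasing) auto
      finally show ?thesis by simp
    next
      case False
      then have h8: "h \<ge> 8" by simp
      define D where "D = C - 1"
      have D2: "D \<ge> 2" using assms unfolding D_def by simp
      define x where "x = 2 / real h powr D"
      have x0: "0 \<le> x" unfolding x_def by simp
      have "V \<le> (\<Sum>c\<in>cv h k ` FS. \<Prod>i=1..k. uD h D (c i))"
        unfolding Vrw[OF h1] FS_def D_def by (rule step1[OF h1])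
      also have "\<dots> \<le> real k * (\<Sum>n=0..h div 2. uD h D n) ^ (k - 1)"
        unfolding FS_def by (rule step2) (use h1 assms D2 in auto)
      also have "\<dots> \<le> real k * (1 + x) ^ (k - 1)"
        unfolding x_def using Sbound[OF h8 D2] k1
        by (intro mult_left_mono power_mono) (auto intro: sum_nonneg simp: uD_nonneg)
      also have "\<dots> \<le> real k * exp x ^ (k - 1)"
        using x0 k1 by (intro mult_left_mono power_mono) (auto simp: exp_ge_add_one_self)
      also have "\<dots> = real k * exp (real (k - 1) * x)" by (simp add: exp_of_nat_mult)
      also have "\<dots> \<le> real k * exp (real k * x)"
        using x0 k1 by (intro mult_left_mono) (auto intro!: mult_right_mono)
      also have "\<dots> \<le> (real h * real k + 1) * exp (real k * x)"
      proof (rule mult_right_mono)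
        have "1 * real k \<le> real h * real k" using h1 k1 by (intro mult_right_mono) auto
        then show "real k \<le> real h * real k + 1" by simp
      qed simp
      also have "real k * x = 2 * real k / zpow (real h) (C - 1)"
        using h1 unfolding x_def D_def zpow_def by simp
      finally show ?thesis by simp
    qed
  qed
  then show ?thesis unfolding V_def FS_def .
qed

end
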